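(* Let $x\in(0,1)$ and let $n$ be an integer with $n\ge n_0(x)$. Then \[ \frac{x^{2n}}{(1-x)^{2n+2}}\cdot\frac{(n!)^2}{((2n)!)^2}\le \max_{|z|=x}|R_n(z)|< \frac{2x^{2n}}{(1-x)^{2n+2}}\cdot\frac{(n!)^2}{((2n)!)^2}. \]
   Context: For $n\ge1$ let $y_n(z)=\sum_{k=0}^{n}\frac{(n+k)!}{(n-k)!\,k!}\left(\frac{z}{2}\right)^k$ be the $n$-th Bessel polynomial and let $\alpha_{n1},\dots,\alpha_{nn}$ be its zeros (they are simple). Put $a_{nk}=1-\alpha_{nk}/2$ and $b_{nk}=1+\alpha_{nk}/2$ for $k=1,\dots,n$. Define the rational function \[ R_n(z)=\frac{1}{(z-1)^2}-\sum_{k=1}^n\frac{a_{nk}}{1-a_{nk}z}+\sum_{k=1}^n\frac{b_{nk}}{1-b_{nk}z} \] (so that $zR_n(z)=zg'(z)-\sum_k(g(a_{nk}z)-g(b_{nk}z))$ for $g(z)=z/(1-z)$). For $x\in(0,1)$ put $n_0(x)=\max\{14,\;x^2(1-x)^{-2}\}-1$. *)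

theory Defs
  imports "HOL-Analysis.Analysis" "HOL-Computational_Algebra.Polynomial"
begin

definition bessel_poly :: "nat \<Rightarrow> complex poly" where
  "bessel_poly n = (\<Sum>k\<le>n. monom (of_real (fact (n + k) / (fact (n - k) * fact k * 2 ^ k))) k)"

text \<open>The set of zeros of y_n (they are simple, so summing over this set is summing over
  alpha_{n1},...,alpha_{nn}).\<close>
definition bessel_zeros :: "nat \<Rightarrow> complex set" where
  "bessel_zeros n = {z. poly (bessel_poly n) z = 0}"

definition R :: "nat \<Rightarrow> complex \<Rightarrow> complex" where
  "R n z = 1 / (z - 1)^2
     - (\<Sum>\<alpha>\<in>bessel_zeros n. (1 - \<alpha>/2) / (1 - (1 - \<alpha>/2) * z))
     + (\<Sum>\<alpha>\<in>bessel_zeros n. (1 + \<alpha>/2) / (1 - (1 + \<alpha>/2) * z))"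

definition n0 :: "real \<Rightarrow> real" where
  "n0 x = max 14 (x^2 / (1 - x)^2) - 1"

end

theory Submission imports Defs "HOL-Computational_Algebra.Fundamental_Theorem_Algebra" begin

definition crr :: "nat \<Rightarrow> nat \<Rightarrow> real" where
  "crr n k = fact (n + k) / (fact (n - k) * fact k * 2 ^ k)"

lemma coeff_bessel: "coeff (bessel_poly n) k = (if k \<le> n then complex_of_real (crr n k) else 0)"
  unfolding bessel_poly_def crr_def by (simp add: coeff_sum coeff_monom)

lemma crr_rec:
  assumes "k < n"
  shows "2 * real (k+1) * crr n (k+1) = real (n*(n+1) - k*(k+1)) * crr n k"
proof -
  obtain m where n: "n = k + 1 + m" using assms by (metis add_Suc less_imp_Suc_add add.commute add_Suc_right plus_1_eq_Suc)
  have e1: "n + (k+1) = Suc (2*k+m+1)" "n - (k+1) = m" "n + k = 2*k+m+1" "n - k = Suc m" using n by auto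
  have e2: "n*(n+1) - k*(k+1) = (m+1)*(2*k+m+2)" unfolding n by (simp add: algebra_simps)
  have A: "fact (Suc (2*k+m+1)) = real (2*k+m+2) * fact (2*k+m+1)" by (simp add: algebra_simps)
  have B: "fact (Suc m) = real (m+1) * fact m" by simp
  have C: "fact (k+1) = real (k+1) * (fact k :: real)" by simp
  have G: "\<And>F fm fk p K M::real. fm > 0 \<Longrightarrow> fk > 0 \<Longrightarrow> p > 0 \<Longrightarrow> K \<ge> 0 \<Longrightarrow> M \<ge> 0 \<Longrightarrow>
     2 * (K+1) * ((2*K+M+2) * F / (fm * ((K+1) * fk) * (2 * p))) = ((M+1)*(2*K+M+2)) * (F / ((M+1) * fm * fk * p))"
  proof -
    fix F fm fk p K M :: real
    assume h: "fm > 0" "fk > 0" "p > 0" "K \<ge> 0" "M \<ge> 0"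
    then have "K + 1 \<noteq> 0" "M + 1 \<noteq> 0" "fm \<noteq> 0" "fk \<noteq> 0" "p \<noteq> 0" by auto
    then show "2 * (K+1) * ((2*K+M+2) * F / (fm * ((K+1) * fk) * (2 * p))) = ((M+1)*(2*K+M+2)) * (F / ((M+1) * fm * fk * p))"
      by (simp add: divide_simps)
  qed
  show ?thesis unfolding crr_def e1 e2 A B C power_Suc
    using G[of "fact m" "fact k" "2^k" "real k" "real m" "fact (2*k+m+1)"] by (simp add: algebra_simps)
qed

lemma crr_pos: "k \<le> n \<Longrightarrow> crr n k > 0" unfolding crr_def by simp

lemma coeff_X_mult: "coeff ([:0,1:] * (p::complex poly)) k = (if k = 0 then 0 else coeff p (k - 1))"
  by (cases k) auto

lemma coeff_ofnat_mult: "coeff (of_nat c * p) k = of_nat c * coeff p k"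
  by (simp add: of_nat_poly)

lemma coeff_numeral_mult: "coeff (numeral c * p) k = numeral c * coeff p k"
  by (simp add: numeral_poly)

lemma coeff_numeral_mult2: "coeff (p * numeral c) k = coeff p k * (numeral c :: complex)"
  by (simp add: numeral_poly mult.commute)

lemma bessel_coeff_rec:
  "2 * of_nat (k+1) * coeff (bessel_poly n) (k+1)
     = (of_nat (n*(n+1)) - of_nat (k*(k+1))) * (coeff (bessel_poly n) k :: complex)"
proof (cases "k < n")
  case True
  have "2 * real (k+1) * crr n (k+1) = real (n*(n+1) - k*(k+1)) * crr n k" by (rule crr_rec[OF True])
  moreover have "k*(k+1) \<le> n*(n+1)" using True by (intro mult_le_mono) auto
  ultimately have "2 * real (k+1) * crr n (k+1) = (real (n*(n+1)) - real (k*(k+1))) * crr n k"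
    by (simp add: of_nat_diff)
  then have "complex_of_real (2 * real (k+1) * crr n (k+1)) = complex_of_real ((real (n*(n+1)) - real (k*(k+1))) * crr n k)"
    by simp
  then show ?thesis using True by (simp add: coeff_bessel)
next
  case False
  then show ?thesis by (cases "k = n") (auto simp: coeff_bessel)
qed

lemma bessel_ode0:
  fixes n :: nat
  defines "y \<equiv> bessel_poly n"
  shows "[:0,1:] * ([:0,1:] * pderiv (pderiv y)) + 2 * ([:0,1:] * pderiv y) + 2 * pderiv y
          = of_nat (n*(n+1)) * y"
proof -
  have eq: "of_nat (n*(n+1)) * y = smult (of_nat (n*(n+1))) y" by (simp add: of_nat_poly)
  show ?thesis unfolding eq
proof (rule poly_eqI)
  fix k
  have R: "\<And>k. 2 * of_nat (k+1) * coeff y (k+1) = (of_nat (n*(n+1)) - of_nat (k*(k+1))) * coeff y k"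
    unfolding y_def by (rule bessel_coeff_rec)
  show "coeff ([:0,1:] * ([:0,1:] * pderiv (pderiv y)) + 2 * ([:0,1:] * pderiv y) + 2 * pderiv y) k =
         coeff (smult (of_nat (n*(n+1))) y) k"
  proof (cases k)
    case 0
    then show ?thesis using R[of 0] by (simp add: coeff_X_mult coeff_ofnat_mult coeff_numeral_mult coeff_pderiv)
  next
    case (Suc m)
    show ?thesis
    proof (cases m)
      case 0
      then show ?thesis using R[of 1] \<open>k = Suc m\<close>
        by (simp add: coeff_X_mult coeff_ofnat_mult coeff_numeral_mult coeff_numeral_mult2 coeff_pderiv algebra_simps)
    next
      case (Suc j)
      then show ?thesis using R[of "j+2"] \<open>k = Suc m\<close>
        by (simp add: coeff_X_mult coeff_ofnat_mult coeff_numeral_mult coeff_numeral_mult2 coeff_pderiv algebra_simps)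
    qed
  qed
qed
qed

lemma bessel_ode_pt:
  "w^2 * poly (pderiv (pderiv (bessel_poly n))) w + (2*w+2) * poly (pderiv (bessel_poly n)) w
     = of_nat (n*(n+1)) * poly (bessel_poly n) w"
  using arg_cong[OF bessel_ode0[of n], of "\<lambda>p. poly p w"]
  by (simp add: algebra_simps power2_eq_square)

lemma bessel_ode_pt':
  "2*w * poly (pderiv (pderiv (bessel_poly n))) w + w^2 * poly (pderiv (pderiv (pderiv (bessel_poly n)))) w
     + 2 * poly (pderiv (bessel_poly n)) w + (2*w+2) * poly (pderiv (pderiv (bessel_poly n))) w
     = of_nat (n*(n+1)) * poly (pderiv (bessel_poly n)) w"
  using arg_cong[OF bessel_ode0[of n], of "\<lambda>p. poly (pderiv p) w"]
  by (simp add: pderiv_mult pderiv_add pderiv_pCons algebra_simps power2_eq_square)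

lemma pder_neg: "pderiv [:0, -1::complex:] = [:-1:]"
  by (simp add: pderiv_pCons)

lemma f_evals:
  fixes y :: "complex poly"
  shows "poly (pcompose y [:0,-1:]) w = poly y (-w)"
    "poly (pderiv (pcompose y [:0,-1:])) w = - poly (pderiv y) (-w)"
    "poly (pderiv (pderiv (pcompose y [:0,-1:]))) w = poly (pderiv (pderiv y)) (-w)"
    "poly (pderiv (pderiv (pderiv (pcompose y [:0,-1:])))) w = - poly (pderiv (pderiv (pderiv y))) (-w)"
  by (simp_all add: poly_pcompose pderiv_pcompose pder_neg pderiv_mult pderiv_minus)

definition Hp :: "nat \<Rightarrow> complex poly" where
  "Hp n = smult 2 (bessel_poly n * pcompose (bessel_poly n) [:0,-1:])
     + [:0,1:]^2 * (pderiv (bessel_poly n) * pcompose (bessel_poly n) [:0,-1:]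
                    - bessel_poly n * pderiv (pcompose (bessel_poly n) [:0,-1:]))"

lemma pderiv_Hp: "pderiv (Hp n) = 0"
proof -
  have "poly (pderiv (Hp n)) w = 0" for w
  proof -
    define a where "a = poly (bessel_poly n) w"
    define a1 where "a1 = poly (pderiv (bessel_poly n)) w"
    define a2 where "a2 = poly (pderiv (pderiv (bessel_poly n))) w"
    define b where "b = poly (bessel_poly n) (-w)"
    define b1 where "b1 = poly (pderiv (bessel_poly n)) (-w)"
    define b2 where "b2 = poly (pderiv (pderiv (bessel_poly n))) (-w)"
    define L where "L = (of_nat (n*(n+1)) :: complex)"
    have o1: "w^2 * a2 + (2*w+2) * a1 = L * a" unfolding a_def a1_def a2_def L_def by (rule bessel_ode_pt)
    have o2: "(-w)^2 * b2 + (2*(-w)+2) * b1 = L * b" unfolding b_def b1_def b2_def L_def by (rule bessel_ode_pt)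
    have h0: "poly (pderiv (Hp n)) w = 2 * (a1 * b + a * (-b1)) + 2 * w * (a1 * b - a * (-b1))
          + w^2 * (a2 * b + a1 * (-b1) - (a1 * (-b1) + a * b2))"
      unfolding Hp_def a_def a1_def a2_def b_def b1_def b2_def
      by (simp add: pderiv_mult pderiv_add pderiv_diff pderiv_smult pderiv_power pderiv_pCons f_evals algebra_simps power2_eq_square)
    have e1: "w^2*a2 = L*a - (2*w+2)*a1" using o1 by (simp add: eq_diff_eq)
    have e2: "w^2*b2 = L*b - (2-2*w)*b1" using o2 by (simp add: eq_diff_eq algebra_simps)
    have "2 * (a1 * b + a * (-b1)) + 2 * w * (a1 * b - a * (-b1))
          + w^2 * (a2 * b + a1 * (-b1) - (a1 * (-b1) + a * b2)) = 2*a1*b - 2*a*b1 + 2*w*a1*b + 2*w*a*b1 + (w^2*a2)*b - a*(w^2*b2)"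
      by (simp add: algebra_simps)
    also have "\<dots> = 0" unfolding e1 e2 by (simp add: algebra_simps)
    finally show ?thesis using h0 by simp
  qed
  then have "poly (pderiv (Hp n)) = poly 0" by (simp add: fun_eq_iff)
  then show ?thesis by (simp only: poly_eq_poly_eq_iff)
qed

lemma bessel_at0: "poly (bessel_poly n) 0 = 1"
  by (simp add: poly_0_coeff_0 coeff_bessel crr_def)

lemma H_pt: "2 * poly (bessel_poly n) w * poly (bessel_poly n) (-w)
   + w^2 * (poly (pderiv (bessel_poly n)) w * poly (bessel_poly n) (-w) + poly (bessel_poly n) w * poly (pderiv (bessel_poly n)) (-w)) = 2"
proof -
  have d: "degree (Hp n) = 0" using pderiv_Hp[of n] by (simp add: pderiv_eq_0_iff)
  have "poly (Hp n) w = poly (Hp n) 0" by (simp add: poly_altdef d)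
  moreover have "poly (Hp n) 0 = 2" unfolding Hp_def by (simp add: bessel_at0 poly_pcompose)
  ultimately have "poly (Hp n) w = 2" by simp
  then show ?thesis unfolding Hp_def by (simp add: f_evals algebra_simps)
qed

lemma bessel_nz: "bessel_poly n \<noteq> 0"
  using bessel_at0[of n] by auto

lemma bessel_rsf: "rsquarefree (bessel_poly n)"
  unfolding rsquarefree_roots
proof (intro allI notI)
  fix a assume h: "poly (bessel_poly n) a = 0 \<and> poly (pderiv (bessel_poly n)) a = 0"
  from H_pt[of n a] h show False by simp
qed

lemma finite_zeros: "finite (bessel_zeros n)"
  unfolding bessel_zeros_def using poly_roots_finite[OF bessel_nz] by simp

lemma zeros_logderiv:
  assumes "poly (bessel_poly n) u \<noteq> 0"
  shows "(\<Sum>\<alpha>\<in>bessel_zeros n. 1/(u - \<alpha>)) = poly (pderiv (bessel_poly n)) u / poly (bessel_poly n) u"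
proof -
  define Z where "Z = bessel_zeros n"
  define c where "c = lead_coeff (bessel_poly n)"
  have fin: "finite Z" unfolding Z_def by (rule finite_zeros)
  have dec: "smult c (\<Prod>z\<in>Z. [:-z, 1:]) = bessel_poly n"
    unfolding c_def Z_def bessel_zeros_def by (rule complex_poly_decompose_rsquarefree[OF bessel_rsf])
  have uZ: "u \<notin> Z" using assms unfolding Z_def bessel_zeros_def by simp
  have py: "poly (bessel_poly n) u = c * (\<Prod>z\<in>Z. u - z)"
    by (subst dec[symmetric]) (simp add: poly_prod)
  have pd: "poly (pderiv (bessel_poly n)) u = c * (\<Sum>a\<in>Z. \<Prod>z\<in>Z-{a}. u - z)"
    by (subst dec[symmetric]) (simp add: pderiv_smult pderiv_prod pderiv_pCons poly_sum poly_prod)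
  have nz: "(\<Prod>z\<in>Z. u - z) \<noteq> 0" using uZ fin by (auto simp: prod_zero_iff)
  have c0: "c \<noteq> 0" unfolding c_def using bessel_nz by simp
  have "(\<Sum>a\<in>Z. 1/(u - a)) = (\<Sum>a\<in>Z. (\<Prod>z\<in>Z-{a}. u - z) / (\<Prod>z\<in>Z. u - z))"
  proof (rule sum.cong[OF refl])
    fix a assume a: "a \<in> Z"
    have "(\<Prod>z\<in>Z. u - z) = (u - a) * (\<Prod>z\<in>Z-{a}. u - z)" using fin a by (rule prod.remove)
    moreover have "u - a \<noteq> 0" using a uZ by auto
    ultimately show "1/(u-a) = (\<Prod>z\<in>Z-{a}. u - z) / (\<Prod>z\<in>Z. u - z)" using nz by (simp add: field_simps)
  qed
  also have "\<dots> = (\<Sum>a\<in>Z. \<Prod>z\<in>Z-{a}. u - z) / (\<Prod>z\<in>Z. u - z)" by (simp add: sum_divide_distrib)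
  also have "\<dots> = poly (pderiv (bessel_poly n)) u / poly (bessel_poly n) u" unfolding py pd using c0 by simp
  finally show ?thesis unfolding Z_def .
qed

lemma term_id:
  fixes z \<alpha> w :: complex
  assumes z: "z \<noteq> 0" and w: "w = 2*(z-1)/z" and a1: "\<alpha> \<noteq> w" and a2: "\<alpha> \<noteq> -w"
  shows "- ((1 - \<alpha>/2) / (1 - (1 - \<alpha>/2) * z)) + (1 + \<alpha>/2) / (1 - (1 + \<alpha>/2) * z)
         = - (2/z^2) * (1/(\<alpha> - w) + 1/(\<alpha> + w))"
proof -
  have e1: "1 - (1 - \<alpha>/2) * z = (z/2) * (\<alpha> - w)" using z unfolding w by (simp add: field_simps)
  have e2: "1 - (1 + \<alpha>/2) * z = - (z/2) * (\<alpha> + w)" using z unfolding w by (simp add: field_simps)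
  have n1: "\<alpha> - w \<noteq> 0" "\<alpha> + w \<noteq> 0" using a1 a2 by (auto simp: add_eq_0_iff)
  have wz: "w * z = 2*(z-1)" using z unfolding w by simp
  have n2: "\<alpha>*z + w*z \<noteq> 0" "\<alpha>*z - w*z \<noteq> 0" using n1 z
    by (metis distrib_right mult_eq_0_iff, metis left_diff_distrib mult_eq_0_iff)
  have f1: "(1 - \<alpha>/2) / ((z/2) * (\<alpha> - w)) = (1/z) * ((2 - w)/(\<alpha> - w) - 1)"
    using z n1 n2 by (simp add: field_simps)
  have f2: "(1 + \<alpha>/2) / (- (z/2) * (\<alpha> + w)) = - (1/z) * ((2 - w)/(\<alpha> + w) + 1)"
  proof -
    have B: "- (z/2) * (\<alpha> + w) \<noteq> 0" using z n1 by simp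
    have a: "((2 - w)/(\<alpha>+w) + 1) * (\<alpha>+w) = (2-w) + (\<alpha>+w)" using n1 by (simp add: distrib_right)
    have b: "(-(1/z)) * (-(z/2)) = 1/2" using z by simp
    have "(- (1/z) * ((2 - w)/(\<alpha> + w) + 1)) * (- (z/2) * (\<alpha> + w))
       = ((-(1/z)) * (-(z/2))) * (((2 - w)/(\<alpha>+w) + 1) * (\<alpha>+w))" by (simp only: mult_ac)
    also have "\<dots> = (1/2) * ((2 - w) + (\<alpha> + w))" unfolding a b ..
    also have "\<dots> = 1 + \<alpha>/2" by (simp add: field_simps)
    finally show ?thesis using B by (simp add: divide_eq_eq)
  qed
  have f3: "2 - w = 2/z" using z unfolding w by (simp add: field_simps)
  show ?thesis unfolding e1 e2 f1 f2 f3
    by (simp only: divide_inverse power2_eq_square) (simp add: algebra_simps)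
qed

lemma R_closed:
  fixes z w :: complex
  assumes z0: "z \<noteq> 0" and z1: "z \<noteq> 1" and w: "w = 2*(z-1)/z"
    and yw: "poly (bessel_poly n) w \<noteq> 0" and ymw: "poly (bessel_poly n) (-w) \<noteq> 0"
  shows "R n z = 1/((z-1)^2 * (poly (bessel_poly n) w * poly (bessel_poly n) (-w)))"
proof -
  define Z where "Z = bessel_zeros n"
  define A where "A = poly (bessel_poly n) w"
  define B where "B = poly (bessel_poly n) (-w)"
  define A1 where "A1 = poly (pderiv (bessel_poly n)) w"
  define B1 where "B1 = poly (pderiv (bessel_poly n)) (-w)"
  have aZ: "\<alpha> \<noteq> w \<and> \<alpha> \<noteq> -w" if "\<alpha> \<in> Z" for \<alpha>
    using that yw ymw unfolding Z_def bessel_zeros_def by auto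
  have "R n z = 1/(z-1)^2 + (\<Sum>\<alpha>\<in>Z. - ((1 - \<alpha>/2) / (1 - (1 - \<alpha>/2) * z)) + (1 + \<alpha>/2) / (1 - (1 + \<alpha>/2) * z))"
    unfolding R_def Z_def by (simp add: sum.distrib sum_negf sum_subtractf)
  also have "\<dots> = 1/(z-1)^2 + (\<Sum>\<alpha>\<in>Z. - (2/z^2) * (1/(\<alpha> - w) + 1/(\<alpha> + w)))"
    using aZ term_id[OF z0 w] by (intro arg_cong2[where f="(+)"] refl sum.cong) auto
  also have "\<dots> = 1/(z-1)^2 - (2/z^2) * ((\<Sum>\<alpha>\<in>Z. 1/(\<alpha> - w)) + (\<Sum>\<alpha>\<in>Z. 1/(\<alpha> + w)))"
    by (simp only: sum_distrib_left sum.distrib sum_negf diff_conv_add_uminus mult_minus_left distrib_left minus_add_distrib)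
  also have "(\<Sum>\<alpha>\<in>Z. 1/(\<alpha> - w)) = - (\<Sum>\<alpha>\<in>Z. 1/(w - \<alpha>))"
  proof -
    have "(\<Sum>\<alpha>\<in>Z. 1/(\<alpha> - w)) = (\<Sum>\<alpha>\<in>Z. - (1/(w - \<alpha>)))"
      by (rule sum.cong) (auto simp: minus_divide_right)
    then show ?thesis by (simp only: sum_negf)
  qed
  also have "(\<Sum>\<alpha>\<in>Z. 1/(w - \<alpha>)) = A1 / A"
    unfolding Z_def A1_def A_def by (rule zeros_logderiv[OF yw])
  also have "(\<Sum>\<alpha>\<in>Z. 1/(\<alpha> + w)) = - (\<Sum>\<alpha>\<in>Z. 1/((-w) - \<alpha>))"
  proof -
    have "(\<Sum>\<alpha>\<in>Z. 1/(\<alpha> + w)) = (\<Sum>\<alpha>\<in>Z. - (1/((-w) - \<alpha>)))"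
      by (rule sum.cong) (auto simp: minus_divide_right add.commute)
    then show ?thesis by (simp only: sum_negf)
  qed
  also have "(\<Sum>\<alpha>\<in>Z. 1/((-w) - \<alpha>)) = B1 / B"
    unfolding Z_def B1_def B_def by (rule zeros_logderiv[OF ymw])
  finally have "R n z = 1/(z-1)^2 - (2/z^2) * (- (A1/A) + - (B1/B))" .
  then have R1: "R n z = 1/(z-1)^2 + (2/z^2) * (A1/A + B1/B)"
    by (simp only: minus_add_distrib[symmetric] mult_minus_right diff_minus_eq_add)
  have H: "2 * A * B + w^2 * (A1 * B + A * B1) = 2"
    unfolding A_def B_def A1_def B1_def by (rule H_pt)
  have A0: "A \<noteq> 0" and B0: "B \<noteq> 0" using yw ymw unfolding A_def B_def by auto
  have w0: "w \<noteq> 0" using z0 z1 unfolding w by simp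
  have zz: "z - 1 \<noteq> 0" using z1 by simp
  have s: "A1/A + B1/B = (2 - 2*A*B) / (w^2 * (A*B))"
  proof -
    have "A1 * B + A * B1 = (2 - 2*A*B) / w^2" using H w0 by (simp add: field_simps)
    moreover have "A1/A + B1/B = (A1 * B + A * B1) / (A*B)" using A0 B0 by (simp add: field_simps)
    ultimately show ?thesis by simp
  qed
  have w2: "w^2 = 4*(z-1)^2/z^2" unfolding w by (simp add: power_divide power2_eq_square algebra_simps)
  have "R n z = 1/(z-1)^2 + (2/z^2) * ((2 - 2*A*B) / (4*(z-1)^2/z^2 * (A*B)))"
    unfolding R1 s w2 ..
  also have "\<dots> = 1/((z-1)^2 * (A*B))"
  proof -
    have gen: "\<And>q zz::complex. q \<noteq> 0 \<Longrightarrow> zz \<noteq> 0 \<Longrightarrow> 1/q + (2/zz) * ((2 - 2*A*B) / (4*q/zz * (A*B))) = 1/(q*(A*B))"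
      using A0 B0 by (simp add: field_simps)
    have "(z-1)^2 \<noteq> 0" "z^2 \<noteq> 0" using zz z0 by auto
    from gen[OF this] show ?thesis .
  qed
  finally show ?thesis unfolding A_def B_def .
qed

lemma G_alg:
  fixes w a a1 a2 a3 F F1 F2 F3 L :: complex
  assumes e1: "w^2 * a2 + (2*w+2) * a1 = L * a"
    and e2: "2*w*a2 + w^2*a3 + 2*a1 + (2*w+2)*a2 = L * a1"
    and e3: "w^2 * F2 + (2*w-2) * F1 = L * F"
    and e4: "2*w*F2 + w^2*F3 + 2*F1 + (2*w-2)*F2 = L * F1"
  shows "w^4 * (a3*F + 3*a2*F1 + 3*a1*F2 + a*F3) + 6*w^3 * (a2*F + 2*a1*F1 + a*F2)
     + (6 - 4*L) * w^2 * (a1*F + a*F1) - 4*L*w*(a*F) - 4*(a1*F + a*F1) = 0"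
  using assms by algebra

definition Pb :: "nat \<Rightarrow> complex poly" where
  "Pb n = bessel_poly n * pcompose (bessel_poly n) [:0,-1:]"

lemma poly_Pb: "poly (Pb n) w = poly (bessel_poly n) w * poly (bessel_poly n) (-w)"
  unfolding Pb_def by (simp add: poly_pcompose)

definition Qb :: "nat \<Rightarrow> complex poly" where
  "Qb n = [:0,1:]^3 * pderiv (pderiv (pderiv (Pb n))) + smult 6 ([:0,1:]^2 * pderiv (pderiv (Pb n)))
      + smult (6 - 4 * of_nat (n*(n+1))) ([:0,1:] * pderiv (Pb n)) - smult (4 * of_nat (n*(n+1))) (Pb n)"

lemma G_poly: "[:0,1:] * Qb n - smult 4 (pderiv (Pb n)) = 0"
proof -
  have "poly ([:0,1:] * Qb n - smult 4 (pderiv (Pb n))) w = 0" for w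
  proof -
    define y where "y = bessel_poly n"
    define f where "f = pcompose (bessel_poly n) [:0,-1:]"
    define L where "L = (of_nat (n*(n+1)) :: complex)"
    define a where "a = poly y w"
    define a1 where "a1 = poly (pderiv y) w"
    define a2 where "a2 = poly (pderiv (pderiv y)) w"
    define a3 where "a3 = poly (pderiv (pderiv (pderiv y))) w"
    define F where "F = poly f w"
    define F1 where "F1 = poly (pderiv f) w"
    define F2 where "F2 = poly (pderiv (pderiv f)) w"
    define F3 where "F3 = poly (pderiv (pderiv (pderiv f))) w"
    have e1: "w^2 * a2 + (2*w+2) * a1 = L * a" unfolding a_def a1_def a2_def L_def y_def by (rule bessel_ode_pt)
    have e2: "2*w*a2 + w^2*a3 + 2*a1 + (2*w+2)*a2 = L * a1"
      unfolding a1_def a2_def a3_def L_def y_def by (rule bessel_ode_pt')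
    have fv: "F = poly y (-w)" "F1 = - poly (pderiv y) (-w)" "F2 = poly (pderiv (pderiv y)) (-w)"
       "F3 = - poly (pderiv (pderiv (pderiv y))) (-w)"
      unfolding F_def F1_def F2_def F3_def f_def y_def by (simp_all add: f_evals)
    have e3: "w^2 * F2 + (2*w-2) * F1 = L * F"
      using bessel_ode_pt[of "-w" n] unfolding fv L_def y_def by (simp add: algebra_simps)
    have e4: "2*w*F2 + w^2*F3 + 2*F1 + (2*w-2)*F2 = L * F1"
      using bessel_ode_pt'[of "-w" n] unfolding fv L_def y_def by (simp add: algebra_simps)
    have "poly ([:0,1:] * Qb n - smult 4 (pderiv (Pb n))) w =
       w^4 * (a3*F + 3*a2*F1 + 3*a1*F2 + a*F3) + 6*w^3 * (a2*F + 2*a1*F1 + a*F2)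
     + (6 - 4*L) * w^2 * (a1*F + a*F1) - 4*L*w*(a*F) - 4*(a1*F + a*F1)"
    proof -
      have hP1: "poly (pderiv (Pb n)) w = a1*F + a*F1"
        unfolding Pb_def a_def a1_def F_def F1_def y_def f_def by (simp add: pderiv_mult algebra_simps)
      have hP2: "poly (pderiv (pderiv (Pb n))) w = a2*F + 2*a1*F1 + a*F2"
        unfolding Pb_def a_def a1_def a2_def F_def F1_def F2_def y_def f_def by (simp add: pderiv_mult pderiv_add algebra_simps)
      have hP3: "poly (pderiv (pderiv (pderiv (Pb n)))) w = a3*F + 3*a2*F1 + 3*a1*F2 + a*F3"
        unfolding Pb_def a_def a1_def a2_def a3_def F_def F1_def F2_def F3_def y_def f_def
        by (simp add: pderiv_mult pderiv_add algebra_simps)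
      have hP0: "poly (Pb n) w = a * F" unfolding Pb_def a_def F_def y_def f_def by simp
      show ?thesis unfolding Qb_def L_def[symmetric]
        by (simp add: hP0 hP1 hP2 hP3 algebra_simps power2_eq_square power3_eq_cube power4_eq_xxxx)
    qed
    also have "\<dots> = 0" by (rule G_alg[OF e1 e2 e3 e4])
    finally show ?thesis .
  qed
  then have "poly ([:0,1:] * Qb n - smult 4 (pderiv (Pb n))) = poly 0" by (simp add: fun_eq_iff)
  then show ?thesis by (simp only: poly_eq_poly_eq_iff)
qed

lemma cX1: "coeff ([:0,1:] * pderiv p) k = of_nat k * (coeff p k :: complex)"
  by (cases k) (simp_all add: coeff_X_mult coeff_pderiv)

lemma cX2: "coeff ([:0,1:]^2 * pderiv (pderiv p)) k = of_nat k * (of_nat k - 1) * (coeff p k :: complex)"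
proof -
  have "[:0,1:]^2 * pderiv (pderiv p) = [:0,1:] * ([:0,1:] * pderiv (pderiv p))"
    by (simp add: power2_eq_square mult.assoc)
  then show ?thesis
    apply (cases k)
     apply (simp add: coeff_X_mult coeff_pderiv)
    subgoal for m by (cases m) (simp_all add: coeff_X_mult coeff_pderiv algebra_simps)
    done
qed

lemma cX3: "coeff ([:0,1:]^3 * pderiv (pderiv (pderiv p))) k
   = of_nat k * (of_nat k - 1) * (of_nat k - 2) * (coeff p k :: complex)"
proof -
  have "[:0,1:]^3 * pderiv (pderiv (pderiv p)) = [:0,1:] * ([:0,1:] * ([:0,1:] * pderiv (pderiv (pderiv p))))"
    by (simp add: power3_eq_cube mult.assoc)
  then show ?thesis
    apply (cases k)
     apply (simp add: coeff_X_mult coeff_pderiv)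
    subgoal for m apply (cases m)
       apply (simp add: coeff_X_mult coeff_pderiv)
      subgoal for j by (cases j) (simp_all add: coeff_X_mult coeff_pderiv algebra_simps)
      done
    done
qed

lemma Pb_rec:
  "4 * of_nat (k+2) * coeff (Pb n) (k+2)
     = of_nat (k+1) * (of_nat k * (of_nat k + 2) - 4 * of_nat (n*(n+1))) * coeff (Pb n) k"
proof -
  define L where "L = (of_nat (n*(n+1)) :: complex)"
  have "coeff ([:0,1:] * Qb n - smult 4 (pderiv (Pb n))) (Suc k) = 0" unfolding G_poly by simp
  moreover have "coeff ([:0,1:] * Qb n) (Suc k) = coeff (Qb n) k" by (simp only: coeff_X_mult) simp
  ultimately have "coeff (Qb n) k = 4 * coeff (pderiv (Pb n)) (Suc k)"
    by (simp only: coeff_diff coeff_smult) simp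
  also have "coeff (pderiv (Pb n)) (Suc k) = of_nat (k+2) * coeff (Pb n) (k+2)"
    using coeff_pderiv[of "Pb n" "Suc k"] by simp
  finally have "coeff (Qb n) k = 4 * of_nat (k+2) * coeff (Pb n) (k+2)" by simp
  moreover have "coeff (Qb n) k = (of_nat k * (of_nat k - 1) * (of_nat k - 2) + 6 * (of_nat k * (of_nat k - 1))
        + (6 - 4*L) * of_nat k - 4 * L) * coeff (Pb n) k"
    unfolding Qb_def L_def[symmetric] by (simp only: coeff_add coeff_diff coeff_smult cX1 cX2 cX3) (simp add: algebra_simps)
  ultimately show ?thesis unfolding L_def[symmetric] by (simp add: algebra_simps)
qed

lemma Pb_1: "coeff (Pb n) 1 = 0"
proof -
  have "coeff ([:0,1:] * Qb n - smult 4 (pderiv (Pb n))) 0 = 0" unfolding G_poly by simp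
  moreover have "coeff ([:0,1:] * Qb n) 0 = 0" by (simp only: coeff_X_mult) simp
  ultimately have "coeff (pderiv (Pb n)) 0 = 0"
    by (simp only: coeff_diff coeff_smult) simp
  then show ?thesis using coeff_pderiv[of "Pb n" 0] by simp
qed

lemma deg_bessel: "degree (bessel_poly n) = n"
proof (rule antisym)
  show "degree (bessel_poly n) \<le> n" by (rule degree_le) (simp add: coeff_bessel)
  show "n \<le> degree (bessel_poly n)" by (rule le_degree) (simp add: coeff_bessel crr_def)
qed

lemma coeff_f: "coeff (pcompose (bessel_poly n) [:0,-1:]) k = (-1)^k * coeff (bessel_poly n) k"
  by (simp add: coeff_pcompose_linear)

lemma deg_f: "degree (pcompose (bessel_poly n) [:0,-1:]) = n"
proof (rule antisym)
  show "degree (pcompose (bessel_poly n) [:0,-1:]) \<le> n" by (rule degree_le) (simp add: coeff_f coeff_bessel)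
  show "n \<le> degree (pcompose (bessel_poly n) [:0,-1:])" by (rule le_degree) (simp add: coeff_f coeff_bessel crr_def)
qed

lemma deg_Pb: "degree (Pb n) = 2*n"
proof -
  have "poly (pcompose (bessel_poly n) [:0,-1:]) 0 = 1" by (simp add: poly_pcompose bessel_at0)
  then have "pcompose (bessel_poly n) [:0,-1:] \<noteq> 0" by auto
  then show ?thesis unfolding Pb_def using bessel_nz by (simp add: degree_mult_eq deg_bessel deg_f)
qed

lemma lead_Pb: "coeff (Pb n) (2*n) = (-1)^n * (complex_of_real (crr n n))^2"
proof -
  have "coeff (Pb n) (2*n) = coeff (bessel_poly n) (degree (bessel_poly n)) *
      coeff (pcompose (bessel_poly n) [:0,-1:]) (degree (pcompose (bessel_poly n) [:0,-1:]))"
    unfolding Pb_def using coeff_mult_degree_sum[of "bessel_poly n" "pcompose (bessel_poly n) [:0,-1:]"]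
    by (simp add: deg_bessel deg_f mult_2)
  then show ?thesis by (simp add: deg_bessel deg_f coeff_f coeff_bessel power2_eq_square)
qed

lemma Pb_0: "coeff (Pb n) 0 = 1"
  unfolding Pb_def using bessel_at0[of n] by (simp add: coeff_mult_0 poly_0_coeff_0[symmetric] poly_pcompose)

fun er :: "nat \<Rightarrow> nat \<Rightarrow> real" where
  "er n 0 = 1"
| "er n (Suc j) = - ((2*j+1) * (real n - j) * (n+j+1) / (2*(j+1))) * er n j"

lemma coeff_Pb_even: "coeff (Pb n) (2*j) = complex_of_real (er n j)"
proof (induction j)
  case 0 then show ?case by (simp add: Pb_0)
next
  case (Suc j)
  have r: "4 * of_nat (2*j+2) * coeff (Pb n) (2*j+2)
     = of_nat (2*j+1) * (of_nat (2*j) * (of_nat (2*j) + 2) - 4 * of_nat (n*(n+1))) * coeff (Pb n) (2*j)"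
    using Pb_rec[of "2*j" n] by (simp add: add.assoc)
  have re: "4 * (2*real j+2) * er n (Suc j) = (2*real j+1) * ((2*real j) * (2*real j+2) - 4 * (real n*(real n+1))) * er n j"
  proof -
    have "2*(real j+1) \<noteq> 0" by simp
    then show ?thesis by (simp add: field_simps)
  qed
  have ce: "(4 * of_nat (2*j+2)) * complex_of_real (er n (Suc j)) = (of_nat (2*j+1) * (of_nat (2*j) * (of_nat (2*j) + 2) - 4 * of_nat (n*(n+1)))) * complex_of_real (er n j)"
  proof -
    have "complex_of_real (4 * (2*real j+2) * er n (Suc j)) = complex_of_real ((2*real j+1) * ((2*real j) * (2*real j+2) - 4 * (real n*(real n+1))) * er n j)"
      using re by simp
    then show ?thesis by (simp add: algebra_simps)
  qed
  have nz: "(4 * of_nat (2*j+2) :: complex) \<noteq> 0" by (simp only: of_nat_eq_0_iff mult_eq_0_iff) simp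
  have "(4 * of_nat (2*j+2)) * coeff (Pb n) (2*j+2) = (4 * of_nat (2*j+2)) * complex_of_real (er n (Suc j))"
    using r ce unfolding Suc.IH by simp
  then have c: "coeff (Pb n) (2*j+2) = complex_of_real (er n (Suc j))" by (simp only: mult_left_cancel[OF nz])
  have e: "2 * Suc j = 2*j+2" by simp
  show ?case unfolding e by (rule c)
qed

lemma coeff_Pb_odd: "coeff (Pb n) (2*j+1) = 0"
proof (induction j)
  case 0 then show ?case using Pb_1 by simp
next
  case (Suc j)
  have "4 * of_nat (2*j+3) * coeff (Pb n) (2*j+3) = 0"
    using Pb_rec[of "2*j+1" n] Suc.IH by (simp add: add.assoc numeral_3_eq_3)
  moreover have nz: "(4 * of_nat (2*j+3) :: complex) \<noteq> 0" by (simp only: of_nat_eq_0_iff mult_eq_0_iff) simp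
  ultimately have c: "coeff (Pb n) (2*j+3) = 0" by (simp only: mult_eq_0_iff) simp
  have e: "2 * Suc j + 1 = 2*j+3" by simp
  show ?case unfolding e by (rule c)
qed

lemma sum_even_odd: "(\<Sum>i<2*(m::nat). (g i :: 'a::comm_monoid_add)) = (\<Sum>j<m. g (2*j) + g (2*j+1))"
  by (induction m) (simp_all add: mult_2 add.assoc)

lemma poly_Pb_sum: "poly (Pb n) w = (\<Sum>j\<le>n. complex_of_real (er n j) * w^(2*j))"
proof -
  have "poly (Pb n) w = (\<Sum>i\<le>2*n. coeff (Pb n) i * w^i)" by (simp add: poly_altdef deg_Pb)
  also have "\<dots> = (\<Sum>i<2*n. coeff (Pb n) i * w^i) + coeff (Pb n) (2*n) * w^(2*n)"
    by (simp add: lessThan_Suc_atMost[symmetric])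
  also have "(\<Sum>i<2*n. coeff (Pb n) i * w^i) = (\<Sum>j<n. coeff (Pb n) (2*j) * w^(2*j))"
    using coeff_Pb_odd[of n] by (simp add: sum_even_odd)
  finally show ?thesis by (simp add: coeff_Pb_even lessThan_Suc_atMost[symmetric])
qed

lemma er_top: "er n n = (-1)^n * (crr n n)^2"
proof -
  have "complex_of_real (er n n) = complex_of_real ((-1)^n * (crr n n)^2)"
    using coeff_Pb_even[of n n] lead_Pb[of n] by simp
  then show ?thesis by (simp only: of_real_eq_iff)
qed

definition rr :: "nat \<Rightarrow> nat \<Rightarrow> real" where
  "rr n j = (2*j+1) * (real n - j) * (n+j+1) / (2*(j+1))"

lemma er_Suc: "er n (Suc j) = - rr n j * er n j"
  by (simp add: rr_def)

declare er.simps(2)[simp del]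

lemma rr_ge:
  assumes "j < n" shows "rr n j \<ge> n"
proof -
  define J where "J = real j"
  define D where "D = real n - real j"
  have J0: "J \<ge> 0" unfolding J_def by simp
  have D1: "D \<ge> 1" unfolding D_def using assms by simp
  have h1: "D*D*(2*J+1) \<ge> D*(2*J+1)" using D1 J0 by (intro mult_right_mono) (auto simp: mult_le_cancel_left1)
  have h2: "D*(4*J*J+4*J) \<ge> 4*J*J+4*J" using mult_right_mono[OF D1, of "4*J*J+4*J"] J0 by simp
  have key: "(2*J+1)*D*(2*J+1+D) \<ge> 2*(J+D)*(J+1)"
  proof -
    have "(2*J+1)*D*(2*J+1+D) - 2*(J+D)*(J+1) = (D*D*(2*J+1) - D*(2*J+1)) + (D*(4*J*J+4*J) - (4*J*J+4*J)) + (2*J*J + 2*J)"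
      by (simp add: algebra_simps)
    moreover have "J*J \<ge> 0" by simp
    ultimately show ?thesis using h1 h2 J0 by linarith
  qed
  have r: "rr n j = ((2*J+1)*D*(2*J+1+D)) / (2*(J+1))" unfolding rr_def J_def D_def by (simp add: algebra_simps)
  have den: "2*(J+1) > 0" using J0 by simp
  have "real n \<le> ((2*J+1)*D*(2*J+1+D)) / (2*(J+1))"
    by (subst pos_le_divide_eq[OF den]) (use key in \<open>simp add: J_def D_def algebra_simps\<close>)
  then show ?thesis unfolding r .
qed

lemma rr_pos: "j < n \<Longrightarrow> rr n j > 0"
  using rr_ge[of j n] by linarith

lemma er_sign: "j \<le> n \<Longrightarrow> (-1)^j * er n j > 0"
proof (induction j)
  case 0 then show ?case by simp
next
  case (Suc j)
  then have "(-1)^j * er n j > 0" "rr n j > 0" using rr_pos[of j n] by auto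
  then have "rr n j * ((-1)^j * er n j) > 0" by simp
  then show ?case by (simp add: er_Suc algebra_simps)
qed

lemma er_abs_Suc: "j < n \<Longrightarrow> \<bar>er n (Suc j)\<bar> = rr n j * \<bar>er n j\<bar>"
  using rr_pos[of j n] by (simp add: er_Suc abs_mult)

lemma er_ratio:
  assumes n13: "n \<ge> 13" and W0: "W \<ge> 0" and W4: "W * (real n + 1) \<ge> 4" and j: "j < n"
  shows "\<bar>er n j\<bar> * W^j \<le> (7/26) * (\<bar>er n (Suc j)\<bar> * W^(Suc j))"
proof -
  define c where "c = \<bar>er n j\<bar> * W^j"
  have c0: "c \<ge> 0" unfolding c_def using W0 by simp
  have "7 * real n * W * (real n + 1) \<ge> 26 * (real n + 1)"
  proof -
    have "7 * real n * W * (real n + 1) = 7 * real n * (W * (real n + 1))" by (simp add: algebra_simps)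
    also have "\<dots> \<ge> 7 * real n * 4" using W4 by (intro mult_left_mono) auto
    moreover have "26 * (real n + 1) \<le> 7 * real n * 4" using n13 by simp
    ultimately show ?thesis by linarith
  qed
  then have a: "7 * real n * W \<ge> 26" using mult_right_le_imp_le[of 26 "real n + 1" "7*real n*W"] by simp
  have "rr n j * W \<ge> real n * W" using rr_ge[OF j] W0 by (intro mult_right_mono) auto
  then have b: "1 \<le> (7/26) * (rr n j * W)" using a by linarith
  have "c \<le> ((7/26) * (rr n j * W)) * c" using mult_right_mono[OF b c0] by simp
  also have "\<dots> = (7/26) * (\<bar>er n (Suc j)\<bar> * W^(Suc j))"
    unfolding c_def er_abs_Suc[OF j] by (simp add: algebra_simps)
  finally show ?thesis unfolding c_def .
qed

lemma er_sum_bound: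
  assumes n13: "n \<ge> 13" and W0: "W \<ge> 0" and W4: "W * (real n + 1) \<ge> 4"
  shows "m \<le> n \<Longrightarrow> (\<Sum>j<m. \<bar>er n j\<bar> * W^j) \<le> (7/19) * (\<bar>er n m\<bar> * W^m)"
proof (induction m)
  case 0 then show ?case using W0 by simp
next
  case (Suc m)
  then have IH: "(\<Sum>j<m. \<bar>er n j\<bar> * W^j) \<le> (7/19) * (\<bar>er n m\<bar> * W^m)" by simp
  have r: "\<bar>er n m\<bar> * W^m \<le> (7/26) * (\<bar>er n (Suc m)\<bar> * W^(Suc m))"
    using er_ratio[OF n13 W0 W4] Suc.prems by simp
  have "(\<Sum>j<Suc m. \<bar>er n j\<bar> * W^j) = (\<Sum>j<m. \<bar>er n j\<bar> * W^j) + \<bar>er n m\<bar> * W^m" by simp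
  also have "\<dots> \<le> (26/19) * (\<bar>er n m\<bar> * W^m)" using IH by linarith
  also have "\<dots> \<le> (26/19) * ((7/26) * (\<bar>er n (Suc m)\<bar> * W^(Suc m)))" using r by linarith
  finally show ?case by (simp add: mult_ac)
qed

lemma upper_E:
  assumes n13: "n \<ge> 13" and W4: "(cmod w)^2 * (real n + 1) \<ge> 4"
  shows "cmod (\<Sum>j\<le>n. complex_of_real (er n j) * w^(2*j)) \<ge> (12/19) * (\<bar>er n n\<bar> * ((cmod w)^2)^n)"
proof -
  define W where "W = (cmod w)^2"
  have W0: "W \<ge> 0" unfolding W_def by simp
  have nt: "cmod (complex_of_real (er n j) * w^(2*j)) = \<bar>er n j\<bar> * W^j" for j
    unfolding W_def by (simp add: norm_mult norm_power power_mult)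
  have "cmod (\<Sum>j\<le>n. complex_of_real (er n j) * w^(2*j)) = cmod ((\<Sum>j<n. complex_of_real (er n j) * w^(2*j)) + complex_of_real (er n n) * w^(2*n))"
    by (simp add: lessThan_Suc_atMost[symmetric])
  moreover have "cmod (\<Sum>j<n. complex_of_real (er n j) * w^(2*j)) \<le> (\<Sum>j<n. \<bar>er n j\<bar> * W^j)"
    using norm_sum[of "\<lambda>j. complex_of_real (er n j) * w^(2*j)" "{..<n}"] by (simp add: nt)
  moreover have "(\<Sum>j<n. \<bar>er n j\<bar> * W^j) \<le> (7/19) * (\<bar>er n n\<bar> * W^n)"
    using er_sum_bound[OF n13 W0 W4[folded W_def]] by simp
  moreover have "cmod (complex_of_real (er n n) * w^(2*n)) \<le> cmod ((\<Sum>j<n. complex_of_real (er n j) * w^(2*j)) + complex_of_real (er n n) * w^(2*n)) + cmod (\<Sum>j<n. complex_of_real (er n j) * w^(2*j))"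
    using norm_triangle_ineq4[of "(\<Sum>j<n. complex_of_real (er n j) * w^(2*j)) + complex_of_real (er n n) * w^(2*n)" "\<Sum>j<n. complex_of_real (er n j) * w^(2*j)"] by simp
  ultimately show ?thesis unfolding W_def[symmetric] using nt[of n] by linarith
qed

lemma lower_E:
  assumes n13: "n \<ge> 13" and x0: "x \<ge> 0" and x4: "x * (real n + 1) \<ge> 4"
  shows "\<bar>\<Sum>j\<le>n. er n j * x^j\<bar> \<le> \<bar>er n n\<bar> * x^n"
proof -
  have main: "m \<le> n \<Longrightarrow> 0 \<le> (-1)^m * (\<Sum>j\<le>m. er n j * x^j) \<and> (-1)^m * (\<Sum>j\<le>m. er n j * x^j) \<le> \<bar>er n m\<bar> * x^m" for m
  proof (induction m)
    case 0 then show ?case by simp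
  next
    case (Suc m)
    then have IH: "0 \<le> (-1)^m * (\<Sum>j\<le>m. er n j * x^j)" "(-1)^m * (\<Sum>j\<le>m. er n j * x^j) \<le> \<bar>er n m\<bar> * x^m" by auto
    have sg: "(-1)^(Suc m) * er n (Suc m) = \<bar>er n (Suc m)\<bar>"
    proof -
      have pos: "(-1)^(Suc m) * er n (Suc m) > 0" using er_sign[OF Suc.prems] .
      have "\<bar>(-1)^(Suc m) * er n (Suc m)\<bar> = \<bar>er n (Suc m)\<bar>" by (simp only: abs_mult power_abs) simp
      then show ?thesis using pos by (metis abs_of_pos)
    qed
    have r: "\<bar>er n m\<bar> * x^m \<le> (7/26) * (\<bar>er n (Suc m)\<bar> * x^(Suc m))"
      using er_ratio[OF n13 x0 x4] Suc.prems by simp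
    have nn: "\<bar>er n (Suc m)\<bar> * x^(Suc m) \<ge> 0" using x0 by simp
    have eq: "(-1)^(Suc m) * (\<Sum>j\<le>Suc m. er n j * x^j) = \<bar>er n (Suc m)\<bar> * x^(Suc m) - (-1)^m * (\<Sum>j\<le>m. er n j * x^j)"
    proof -
      have "(-1)^(Suc m) * (\<Sum>j\<le>Suc m. er n j * x^j) = ((-1)^(Suc m) * er n (Suc m)) * x^(Suc m) - (-1)^m * (\<Sum>j\<le>m. er n j * x^j)"
        by (simp add: algebra_simps)
      then show ?thesis unfolding sg .
    qed
    show ?case unfolding eq using IH r nn by linarith
  qed
  have "\<bar>\<Sum>j\<le>n. er n j * x^j\<bar> = \<bar>(-1)^n * (\<Sum>j\<le>n. er n j * x^j)\<bar>" by (simp add: abs_mult)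
  also have "\<dots> \<le> \<bar>er n n\<bar> * x^n" using main[of n] by simp
  finally show ?thesis .
qed

lemma crr_nn: "crr n n = fact (2*n) / (fact n * 2^n)"
  by (simp add: crr_def mult_2)

lemma keyK:
  fixes x :: real
  assumes x0: "0 < x" and x1: "x < 1"
  shows "crr n n ^2 * (4*(1-x)^2/x^2)^n * (1-x)^2 = 1 / (x^(2*n)/(1-x)^(2*n+2) * (fact n)^2 / (fact (2*n))^2)"
proof -
  have a: "(4*(1-x)^2/x^2)^n = 4^n * (1-x)^(2*n) / x^(2*n)"
    by (simp add: power_divide power_mult_distrib power_mult)
  have f4: "(2::real)^(2*n) = 4^n" by (simp add: power_mult)
  have b: "crr n n ^2 = fact (2*n)^2 / (fact n ^2 * 4^n)"
    unfolding crr_nn f4[symmetric] by (simp add: power_divide power_mult_distrib power_mult[symmetric] mult.commute[of 2])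
  have c: "(1-x)^(2*n+2) = (1-x)^(2*n) * (1-x)^2" by (rule power_add)
  have p: "x^(2*n) > 0" "(1-x)^(2*n) > 0" "(1-x)^2 > 0" "(4::real)^n > 0" using x0 x1 by auto
  have gen: "\<And>P Q S F G T::real. P > 0 \<Longrightarrow> Q > 0 \<Longrightarrow> S > 0 \<Longrightarrow> F > 0 \<Longrightarrow> G > 0 \<Longrightarrow> T > 0 \<Longrightarrow>
     (F^2/(G^2*T)) * (T*Q/P) * S = 1/((P/(Q*S)) * G^2 / F^2)"
    by (simp add: field_simps)
  show ?thesis unfolding a b c using gen[OF p(1) p(2) p(3) _ _ p(4), of "fact (2*n)" "fact n"]
    by (simp add: mult.assoc)
qed

lemma er_nn_abs: "\<bar>er n n\<bar> = crr n n ^2"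
  by (simp add: er_top abs_mult)

lemma crr_nn_pos: "crr n n > 0" by (simp add: crr_pos)

lemma pt_upper:
  fixes x :: real and z :: complex
  assumes x0: "0 < x" and x1: "x < 1" and n13: "n \<ge> 13" and xn: "x^2/(1-x)^2 \<le> real n + 1"
    and zx: "cmod z = x"
  defines "w \<equiv> 2*(z-1)/z"
  shows "poly (Pb n) w \<noteq> 0"
    and "cmod (poly (Pb n) w) \<ge> (12/19) * (crr n n ^2 * (4*(1-x)^2/x^2)^n)"
    and "cmod (z - 1) \<ge> 1 - x"
    and "R n z = 1/((z-1)^2 * poly (Pb n) w)"
proof -
  have z0: "z \<noteq> 0" using zx x0 by auto
  have z1: "z \<noteq> 1" using zx x1 by auto
  show zm1: "cmod (z - 1) \<ge> 1 - x" using norm_triangle_ineq2[of 1 z] zx by (simp add: norm_minus_commute)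
  have cw: "cmod w = 2 * cmod (z-1) / x"
  proof -
    have "cmod w = cmod (2*(z-1)) / cmod z" unfolding w_def by (simp only: norm_divide)
    also have "cmod (2*(z-1)) = 2 * cmod (z-1)" by (simp only: norm_mult) simp
    finally show ?thesis using zx by simp
  qed
  have cw2: "cmod w \<ge> 2*(1-x)/x" unfolding cw using zm1 x0 by (simp add: divide_right_mono)
  have W0: "(cmod w)^2 \<ge> 4*(1-x)^2/x^2"
  proof -
    have "(2*(1-x)/x)^2 \<le> (cmod w)^2" using cw2 x0 x1 by (intro power_mono) auto
    moreover have "(2*(1-x)/x)^2 = 4*(1-x)^2/x^2" unfolding power_divide power_mult_distrib by simp
    ultimately show ?thesis by simp
  qed
  have W4: "(cmod w)^2 * (real n + 1) \<ge> 4"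
  proof -
    have pos: "(1-x)^2 > 0" "x^2 > 0" using x0 x1 by auto
    have "4 = (4*(1-x)^2/x^2) * (x^2/(1-x)^2)" using pos by (simp add: field_simps)
    also have "\<dots> \<le> (cmod w)^2 * (real n + 1)" using W0 xn pos
      by (intro mult_mono) auto
    finally show ?thesis .
  qed
  have ub: "cmod (poly (Pb n) w) \<ge> (12/19) * (\<bar>er n n\<bar> * ((cmod w)^2)^n)"
    unfolding poly_Pb_sum by (rule upper_E[OF n13 W4])
  have "(4*(1-x)^2/x^2)^n \<le> ((cmod w)^2)^n" using W0 x0 by (intro power_mono) auto
  then have "(12/19) * (crr n n ^2 * (4*(1-x)^2/x^2)^n) \<le> (12/19) * (\<bar>er n n\<bar> * ((cmod w)^2)^n)"
    unfolding er_nn_abs by (intro mult_left_mono) auto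
  then show lb: "cmod (poly (Pb n) w) \<ge> (12/19) * (crr n n ^2 * (4*(1-x)^2/x^2)^n)" using ub by linarith
  have "4*(1-x)^2/x^2 > 0" using x0 x1 by simp
  then have "(12/19) * (crr n n ^2 * (4*(1-x)^2/x^2)^n) > 0" using crr_nn_pos[of n] by simp
  then show nz: "poly (Pb n) w \<noteq> 0" using lb by auto
  have y1: "poly (bessel_poly n) w \<noteq> 0" and y2: "poly (bessel_poly n) (-w) \<noteq> 0" using nz by (auto simp: poly_Pb)
  show "R n z = 1/((z-1)^2 * poly (Pb n) w)"
    unfolding poly_Pb by (rule R_closed[OF z0 z1 w_def[THEN meta_eq_to_obj_eq] y1 y2])
qed

theorem proposition3:
  fixes x :: real and n :: nat
  assumes "0 < x" and "x < 1" and "n \<ge> 1" and "real n \<ge> n0 x"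
  shows "x^(2*n) / (1 - x)^(2*n+2) * (fact n)^2 / (fact (2*n))^2
           \<le> (SUP z\<in>sphere (0::complex) x. norm (R n z))
    \<and> (SUP z\<in>sphere (0::complex) x. norm (R n z))
           < 2 * x^(2*n) / (1 - x)^(2*n+2) * (fact n)^2 / (fact (2*n))^2"
proof -
  note x0 = assms(1) and x1 = assms(2)
  have nn: "real n \<ge> max 14 (x^2/(1-x)^2) - 1" using assms(4) unfolding n0_def .
  then have n13': "real n \<ge> 13" by linarith
  then have n13: "n \<ge> 13" by simp
  have xn: "x^2/(1-x)^2 \<le> real n + 1" using nn by linarith
  define K where "K = x^(2*n) / (1 - x)^(2*n+2) * (fact n)^2 / (fact (2*n))^2"
  define C where "C = crr n n ^2 * (4*(1-x)^2/x^2)^n"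
  have K0: "K > 0" unfolding K_def using x0 x1 by simp
  have CK: "C * (1-x)^2 = 1/K" unfolding C_def K_def by (rule keyK[OF x0 x1])
  have p1: "(1-x)^2 > 0" using x1 by simp
  have C0: "C > 0" using CK K0 p1 by (metis divide_pos_pos zero_less_mult_pos2 zero_less_one)
  have ub: "norm (R n z) \<le> (19/12) * K" if zs: "z \<in> sphere (0::complex) x" for z
  proof -
    have zx: "cmod z = x" using zs by simp
    define w where "w = 2*(z-1)/z"
    note pu = pt_upper[OF x0 x1 n13 xn zx, folded w_def]
    have "(1-x)^2 * ((12/19) * C) \<le> cmod (z-1)^2 * cmod (poly (Pb n) w)"
    proof (rule mult_mono)
      show "(1-x)^2 \<le> cmod (z-1)^2" using pu(3) x1 by (intro power_mono) auto
      show "(12/19) * C \<le> cmod (poly (Pb n) w)" using pu(2) unfolding C_def .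
    qed (use C0 in auto)
    moreover have "(1-x)^2 * ((12/19) * C) = (12/19) / K" using CK by (simp add: algebra_simps)
    ultimately have d: "(12/19) / K \<le> cmod (z-1)^2 * cmod (poly (Pb n) w)" by simp
    have "norm (R n z) = 1 / (cmod (z-1)^2 * cmod (poly (Pb n) w))"
      unfolding pu(4) by (simp add: norm_divide norm_mult norm_power)
    also have "\<dots> \<le> 1 / ((12/19) / K)"
      using d K0 by (intro divide_left_mono mult_pos_pos) auto
    also have "\<dots> = (19/12) * K" by simp
    finally show ?thesis .
  qed
  have lb: "norm (R n (complex_of_real x)) \<ge> K"
  proof -
    define z where "z = complex_of_real x"
    have zx: "cmod z = x" unfolding z_def using x0 by simp
    define r where "r = 2*(x-1)/x"
    define w where "w = 2*(z-1)/z"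
    have wr: "w = complex_of_real r" unfolding w_def r_def z_def by simp
    note pu = pt_upper[OF x0 x1 n13 xn zx, folded w_def]
    have r2: "r^2 = 4*(1-x)^2/x^2" unfolding r_def power_divide power_mult_distrib by (simp add: power2_commute)
    have r4: "r^2 * (real n + 1) \<ge> 4"
    proof -
      have pos: "(1-x)^2 > 0" "x^2 > 0" using x0 x1 by auto
      have "4 = (4*(1-x)^2/x^2) * (x^2/(1-x)^2)" using pos by (simp add: field_simps)
      also have "\<dots> \<le> r^2 * (real n + 1)" unfolding r2 using xn pos by (intro mult_left_mono) auto
      finally show ?thesis .
    qed
    have Ew: "poly (Pb n) w = complex_of_real (\<Sum>j\<le>n. er n j * (r^2)^j)"
      unfolding poly_Pb_sum wr by (simp add: power_mult)
    have El: "\<bar>\<Sum>j\<le>n. er n j * (r^2)^j\<bar> \<le> C"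
      using lower_E[OF n13 _ r4] unfolding C_def er_nn_abs r2[symmetric] by simp
    have Epos: "cmod (poly (Pb n) w) > 0" using pu(1) by simp
    have cE: "cmod (poly (Pb n) w) \<le> C" unfolding Ew norm_of_real by (rule El)
    have z1: "cmod (z - 1)^2 = (1-x)^2"
    proof -
      have "z - 1 = complex_of_real (x - 1)" unfolding z_def by simp
      then have "cmod (z - 1) = 1 - x" using x1 by (simp only: norm_of_real)
      then show ?thesis by simp
    qed
    have "norm (R n z) = 1 / (cmod (z-1)^2 * cmod (poly (Pb n) w))"
      unfolding pu(4) by (simp add: norm_divide norm_mult norm_power)
    also have "\<dots> \<ge> 1 / ((1-x)^2 * C)" unfolding z1
      using Epos cE p1 C0 by (intro divide_left_mono mult_left_mono mult_pos_pos) auto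
    also have "1 / ((1-x)^2 * C) = K" using CK K0 by (simp add: mult.commute)
    finally show ?thesis unfolding z_def .
  qed
  have ne: "sphere (0::complex) x \<noteq> {}" using x0 by simp
  have bdd: "bdd_above ((\<lambda>z. norm (R n z)) ` sphere 0 x)"
    using ub by (intro bdd_aboveI2[where M="(19/12)*K"]) auto
  have xs: "complex_of_real x \<in> sphere 0 x" using x0 by simp
  have "K \<le> (SUP z\<in>sphere (0::complex) x. norm (R n z))"
    using lb cSUP_upper[OF xs bdd] by linarith
  moreover have "(SUP z\<in>sphere (0::complex) x. norm (R n z)) \<le> (19/12) * K"
    using ub ne by (intro cSUP_least) auto
  moreover have "(19/12) * K < 2 * K" using K0 by simp
  moreover have "2 * K = 2 * x^(2*n) / (1 - x)^(2*n+2) * (fact n)^2 / (fact (2*n))^2"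
    unfolding K_def by simp
  ultimately show ?thesis unfolding K_def[symmetric] by linarith
qed

end
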